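(* Let $0\le r,r'<p^2-1$ and $\lambda,\lambda'\in\overline{\mathbb{F}}_p^\times$. Then $\psi_{r,\lambda}$ is equivalent to $\psi_{r',\lambda'}$ (conjugate by an element of $\mathrm{GL}_2(\overline{\mathbb{F}}_p)$) if and only if either $r'=r$ and $\lambda'=\lambda$, or $r'\equiv-pr\pmod{p^2-1}$ and $\lambda'=\lambda^{-1}$.
   Context: $p$ odd prime; $\mathcal{G}_F=\mathrm{Gal}(\overline{\mathbb{Q}}_p/F)$, $\mathbb{Q}_{p^2}$ unramified quadratic; $\mathrm{Fr}_p\in\mathcal{G}_{\mathbb{Q}_p}$ a fixed geometric Frobenius lift. $\omega_2$: character of $\mathcal{G}_{\mathbb{Q}_{p^2}}$, on inertia $h\mapsto$ reduction of $h(\sqrt[p^2-1]{p})/\sqrt[p^2-1]{p}$, with $\omega_2(\mathrm{Fr}_p^2)=1$; $\mu_{2,\lambda}$ unramified with $\mathrm{Fr}_p^2\mapsto\lambda$. ${}^LG=\mathrm{GL}_2(\overline{\mathbb{F}}_p)\rtimes\mathcal{G}_{\mathbb{Q}_p}$ with $\mathcal{G}_{\mathbb{Q}_{p^2}}$ acting trivially and $\mathrm{Fr}_pg\mathrm{Fr}_p^{-1}=\Phi_2(g^\top)^{-1}\Phi_2^{-1}$, $\Phi_2=\begin{pmatrix}0&1\\-1&0\end{pmatrix}$. $\psi_{r,\lambda}:\mathcal{G}_{\mathbb{Q}_p}\to{}^LG$ is the homomorphism with $\psi_{r,\lambda}(\mathrm{Fr}_p)=\mathrm{diag}(1,\lambda)\mathrm{Fr}_p$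 and $\psi_{r,\lambda}(h)=\mathrm{diag}\big(\mu_{2,\lambda^{-1}}\omega_2^{r}(h),\mu_{2,\lambda}\omega_2^{-pr}(h)\big)h$ for $h\in\mathcal{G}_{\mathbb{Q}_{p^2}}$. *)

theory Defs
  imports "HOL-Algebra.Group" "HOL-Analysis.Determinants"
    "HOL-Computational_Algebra.Polynomial" "HOL-Number_Theory.Cong"
begin

(* 2x2 matrices over the coefficient field 'k are 'k^2^2; rows/columns indexed 1,2. *)

definition diag2 :: "'k::field \<Rightarrow> 'k \<Rightarrow> 'k^2^2" where
  "diag2 a b = (\<chi> i j. if i = j then (if i = 1 then a else b) else 0)"

definition Phi2 :: "'k::field^2^2" where
  "Phi2 = (\<chi> i j. if i = 1 \<and> j = 2 then 1 else if i = 2 \<and> j = 1 then -1 else 0)"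

(* action of an element of the Galois group on GL_2 inside the L-group:
   trivial on G_{Q_{p^2}} (the subgroup H), and g \<mapsto> Phi2 (g^T)^{-1} Phi2^{-1}
   on the nontrivial coset (that of Fr_p). *)
definition Lact :: "'g set \<Rightarrow> 'g \<Rightarrow> 'k::field^2^2 \<Rightarrow> 'k^2^2" where
  "Lact H \<sigma> B = (if \<sigma> \<in> H then B
                 else Phi2 ** matrix_inv (transpose B) ** matrix_inv Phi2)"

(* multiplication in  ^LG = GL_2 \<rtimes> G_{Q_p}, elements written (A, \<sigma>) = A \<sigma> *)
definition Lmult :: "('g, 'b) monoid_scheme \<Rightarrow> 'g set \<Rightarrow>
    (('k::field^2^2) \<times> 'g) \<Rightarrow> (('k^2^2) \<times> 'g) \<Rightarrow> (('k^2^2) \<times> 'g)" where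
  "Lmult G H x y = (fst x ** Lact H (snd x) (fst y), snd x \<otimes>\<^bsub>G\<^esub> snd y)"

(* Abstract description of the Galois-theoretic data:
   G = G_{Q_p}, H = G_{Q_{p^2}} (index 2), I = inertia subgroup,
   Fr = the fixed geometric Frobenius lift, om2 = \<omega>_2 (a character of H),
   mu \<lambda> = \<mu>_{2,\<lambda>} (unramified character of H with Fr^2 \<mapsto> \<lambda>). *)
definition galois_datum ::
  "nat \<Rightarrow> ('g, 'b) monoid_scheme \<Rightarrow> 'g set \<Rightarrow> 'g set \<Rightarrow> 'g \<Rightarrow>
   ('g \<Rightarrow> 'k::field) \<Rightarrow> ('k \<Rightarrow> 'g \<Rightarrow> 'k) \<Rightarrow> bool" where
  "galois_datum p G H I Fr om2 mu \<longleftrightarrow>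
     group G \<and> subgroup H G \<and> subgroup I G \<and> I \<subseteq> H \<and>
     Fr \<in> carrier G \<and> Fr \<notin> H \<and>
     (\<forall>x\<in>carrier G. x \<notin> H \<longrightarrow> x \<otimes>\<^bsub>G\<^esub> inv\<^bsub>G\<^esub> Fr \<in> H) \<and>
     (\<forall>x\<in>carrier G. \<forall>i\<in>I. x \<otimes>\<^bsub>G\<^esub> i \<otimes>\<^bsub>G\<^esub> inv\<^bsub>G\<^esub> x \<in> I) \<and>
     \<comment> \<open>omega_2\<close>
     (\<forall>h\<in>H. \<forall>k\<in>H. om2 (h \<otimes>\<^bsub>G\<^esub> k) = om2 h * om2 k) \<and>
     (\<forall>h\<in>H. om2 h ^ (p\<^sup>2 - 1) = 1) \<and>
     om2 ` I = {z. z ^ (p\<^sup>2 - 1) = 1} \<and>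
     om2 (Fr \<otimes>\<^bsub>G\<^esub> Fr) = 1 \<and>
     (\<forall>h\<in>H. om2 (Fr \<otimes>\<^bsub>G\<^esub> h \<otimes>\<^bsub>G\<^esub> inv\<^bsub>G\<^esub> Fr) = om2 h ^ p) \<and>
     \<comment> \<open>unramified characters mu_{2,lambda}\<close>
     (\<forall>l. l \<noteq> 0 \<longrightarrow>
        (\<forall>h\<in>H. \<forall>k\<in>H. mu l (h \<otimes>\<^bsub>G\<^esub> k) = mu l h * mu l k) \<and>
        (\<forall>i\<in>I. mu l i = 1) \<and>
        mu l (Fr \<otimes>\<^bsub>G\<^esub> Fr) = l \<and>
        (\<forall>h\<in>H. mu l (Fr \<otimes>\<^bsub>G\<^esub> h \<otimes>\<^bsub>G\<^esub> inv\<^bsub>G\<^esub> Fr) = mu l h)) \<and>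
     (\<forall>l l'. l \<noteq> 0 \<longrightarrow> l' \<noteq> 0 \<longrightarrow> (\<forall>h\<in>H. mu (l * l') h = mu l h * mu l' h))"

definition psi ::
  "nat \<Rightarrow> ('g, 'b) monoid_scheme \<Rightarrow> 'g set \<Rightarrow> 'g \<Rightarrow> ('g \<Rightarrow> 'k::field) \<Rightarrow>
   ('k \<Rightarrow> 'g \<Rightarrow> 'k) \<Rightarrow> nat \<Rightarrow> 'k \<Rightarrow> 'g \<Rightarrow> (('k^2^2) \<times> 'g)" where
  "psi p G H Fr om2 mu r l \<sigma> =
     (let psiH = (\<lambda>h. (diag2 (mu (inverse l) h * om2 h ^ r)
                              (mu l h * inverse (om2 h) ^ (p * r)), h))
      in if \<sigma> \<in> H then psiH \<sigma>
         else Lmult G H (psiH (\<sigma> \<otimes>\<^bsub>G\<^esub> inv\<^bsub>G\<^esub> Fr)) (diag2 1 l, Fr))"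

definition L_equivalent ::
  "('g, 'b) monoid_scheme \<Rightarrow> 'g set \<Rightarrow> ('g \<Rightarrow> ('k::field^2^2) \<times> 'g) \<Rightarrow>
   ('g \<Rightarrow> ('k^2^2) \<times> 'g) \<Rightarrow> bool" where
  "L_equivalent G H f f' \<longleftrightarrow>
     (\<exists>g::'k^2^2. invertible g \<and>
        (\<forall>\<sigma>\<in>carrier G. Lmult G H (Lmult G H (g, \<one>\<^bsub>G\<^esub>) (f \<sigma>)) (matrix_inv g, \<one>\<^bsub>G\<^esub>) = f' \<sigma>))"

end

theory Submission
  imports Defs
begin

definition mk2 :: "'k::field \<Rightarrow> 'k \<Rightarrow> 'k \<Rightarrow> 'k \<Rightarrow> 'k^2^2" where
  "mk2 a b c d = (\<chi> i j. if i = 1 then (if j = 1 then a else b) else (if j = 1 then c else d))"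

lemma mk2_nth[simp]: "mk2 a b c d $ 1 $ 1 = a" "mk2 a b c d $ 1 $ 2 = b"
  "mk2 a b c d $ 2 $ 1 = c" "mk2 a b c d $ 2 $ 2 = d"
  by (simp_all add: mk2_def)

lemma mk2_eq: "mk2 a b c d = mk2 a' b' c' d' \<longleftrightarrow> a = a' \<and> b = b' \<and> c = c' \<and> d = d'"
  unfolding mk2_def vec_eq_iff forall_2 by simp

lemma mk2_mult: "mk2 a b c d ** mk2 a' b' c' d' = mk2 (a*a'+b*c') (a*b'+b*d') (c*a'+d*c') (c*b'+d*d')"
  unfolding matrix_matrix_mult_def mk2_def by (simp add: vec_eq_iff sum_2 forall_2)

lemma diag2_mk2: "diag2 a b = mk2 a 0 0 b"
  unfolding diag2_def mk2_def by (simp add: vec_eq_iff forall_2)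

lemma Phi2_mk2: "Phi2 = mk2 0 1 (-1) 0"
  unfolding Phi2_def mk2_def by (simp add: vec_eq_iff forall_2)

lemma mat1_mk2: "mat 1 = mk2 1 0 0 1"
  unfolding mat_def mk2_def by (simp add: vec_eq_iff forall_2)

lemma transpose_mk2: "transpose (mk2 a b c d) = mk2 a c b d"
  unfolding transpose_def mk2_def by (simp add: vec_eq_iff forall_2)

lemma mk2_eta: "(M::'k::field^2^2) = mk2 (M$1$1) (M$1$2) (M$2$1) (M$2$2)"
  unfolding mk2_def vec_eq_iff forall_2 by simp

lemma matrix_inv_eqI:
  fixes A :: "'k::field^2^2"
  assumes "A ** B = mat 1" "B ** A = mat 1"
  shows "matrix_inv A = B"
proof -
  have ex: "\<exists>A'. A ** A' = mat 1 \<and> A' ** A = mat 1" using assms by blast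
  define C where "C = matrix_inv A"
  have C: "A ** C = mat 1 \<and> C ** A = mat 1" unfolding C_def matrix_inv_def by (rule someI_ex[OF ex])
  have "C = C ** (A ** B)" using assms by (simp add: matrix_mul_rid)
  also have "\<dots> = (C ** A) ** B" by (simp add: matrix_mul_assoc)
  also have "\<dots> = B" using C by (simp add: matrix_mul_lid)
  finally show ?thesis unfolding C_def .
qed

lemma matrix_inv_Phi2: "matrix_inv (Phi2::'k::field^2^2) = mk2 0 (-1) 1 0"
  by (rule matrix_inv_eqI) (simp_all add: Phi2_mk2 mk2_mult mat1_mk2)

lemma matrix_inv_mat1: "matrix_inv (mat 1::'k::field^2^2) = mat 1"
  by (rule matrix_inv_eqI) (simp_all add: mk2_mult mat1_mk2)

lemma matrix_inv_anti:
  assumes "(c::'k::field) \<noteq> 0"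
  shows "matrix_inv (mk2 0 c c 0) = mk2 0 (inverse c) (inverse c) 0"
  by (rule matrix_inv_eqI) (use assms in \<open>simp_all add: mk2_mult mat1_mk2\<close>)

lemma exists_geo_root:
  assumes "m \<ge> 2"
  shows "\<exists>w::'k::alg_closed_field. (\<Sum>i<m. w^i) = 0"
proof -
  have "\<exists>x::'k. (\<Sum>k\<le>m-1. (\<lambda>_. 1::'k) k * x ^ k) = 0"
    by (rule alg_closed) (use assms in auto)
  moreover have "{..m-1} = {..<m}" using assms by auto
  ultimately show ?thesis by simp
qed

lemma roots_dvd:
  fixes N e :: nat
  assumes N: "N > 0" and Nz: "of_nat N \<noteq> (0::'k::alg_closed_field)"
    and all: "\<forall>z::'k. z^N = 1 \<longrightarrow> z^e = 1"
  shows "N dvd e"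
proof (rule ccontr)
  assume nd: "\<not> N dvd e"
  define d where "d = e mod N"
  have d0: "d > 0" "d < N" using nd N by (auto simp: d_def dvd_eq_mod_eq_0)
  have alld: "z^d = 1" if "z^N = 1" for z :: 'k
  proof -
    have "z^e = z^(N * (e div N) + d)" by (simp add: d_def)
    also have "\<dots> = z^d" using that by (simp add: power_add power_mult)
    finally show ?thesis using all that by simp
  qed
  define g where "g = gcd d N"
  have g0: "g > 0" using d0 by (simp add: g_def)
  have gd: "g dvd N" "g \<le> d" using d0 by (auto simp: g_def intro: dvd_imp_le)
  define m where "m = N div g"
  have Nm: "N = g * m" using gd by (simp add: m_def)
  have m2: "m \<ge> 2"
  proof (rule ccontr)
    assume "\<not> m \<ge> 2"
    then have "m \<le> 1" by simp
    then have "N \<le> g" using Nm N by (cases m) auto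
    then show False using gd d0 by simp
  qed
  have mz: "of_nat m \<noteq> (0::'k)" using Nz Nm by auto
  obtain w :: 'k where w: "(\<Sum>i<m. w^i) = 0" using exists_geo_root[OF m2] by blast
  have wm: "w^m = 1" using power_diff_1_eq[of w m] w by simp
  have w1: "w \<noteq> 1" using w mz by auto
  obtain z :: 'k where z: "z^g = w" using nth_root_exists[OF g0] by blast
  have zN: "z^N = 1" using wm z by (simp add: Nm power_mult)
  have zd: "z^d = 1" using alld[OF zN] .
  obtain x y where xy: "d * x = N * y + g" using bezout_nat[of d N] d0 by (auto simp: g_def)
  have "1 = (z^d)^x" using zd by simp
  also have "\<dots> = z^(N*y) * z^g" by (simp add: power_mult[symmetric] xy power_add)
  also have "\<dots> = z^g" using zN by (simp add: power_mult)
  finally show False using z w1 by simp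
qed

lemma pow_dvd_one: "(w::'k::field)^N = 1 \<Longrightarrow> N dvd e \<Longrightarrow> w^e = 1"
  by (auto simp: power_mult elim!: dvdE)

lemma pow_inv_eq: "(w::'k::field) \<noteq> 0 \<Longrightarrow> w^a * w^b = 1 \<Longrightarrow> w^a = inverse w ^ b"
  by (simp add: power_inverse field_simps)

lemma inv_props:
  fixes g :: "'k::field^2^2"
  assumes "invertible g"
  shows "g ** matrix_inv g = mat 1" "matrix_inv g ** g = mat 1"
proof -
  have ex: "\<exists>A'. g ** A' = mat 1 \<and> A' ** g = mat 1" using assms by (simp add: invertible_def)
  have "g ** matrix_inv g = mat 1 \<and> matrix_inv g ** g = mat 1"
    unfolding matrix_inv_def by (rule someI_ex[OF ex])
  then show "g ** matrix_inv g = mat 1" "matrix_inv g ** g = mat 1" by auto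
qed

lemma conj_eq:
  assumes "group G" "subgroup H G" "\<sigma> \<in> carrier G"
  shows "Lmult G H (Lmult G H (g, \<one>\<^bsub>G\<^esub>) (X, \<sigma>)) (gi, \<one>\<^bsub>G\<^esub>) = (g ** X ** Lact H \<sigma> gi, \<sigma>)"
proof -
  have "\<one>\<^bsub>G\<^esub> \<in> H" using assms(2) by (rule subgroup.one_closed)
  then show ?thesis using assms by (simp add: Lmult_def Lact_def group.is_monoid)
qed

lemma nondeg:
  fixes x y u v :: "'k::field"
  assumes "mk2 x y u v ** gi = mat 1" "gi ** mk2 x y u v = mat 1"
  shows "(x \<noteq> 0 \<and> v \<noteq> 0) \<or> (y \<noteq> 0 \<and> u \<noteq> 0)"
proof -
  obtain x' y' u' v' where gi: "gi = mk2 x' y' u' v'" using mk2_eta by blast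
  from assms have e: "x*x'+y*u' = 1" "u*y'+v * v' = 1" "x'*x+y'*u = 1" "u'*y+v' * v = 1"
    by (simp_all add: gi mk2_mult mat1_mk2 mk2_eq)
  show ?thesis using e by auto
qed

lemma grp_cancel:
  assumes "group G" "x \<in> carrier G" "y \<in> carrier G"
  shows "x \<otimes>\<^bsub>G\<^esub> inv\<^bsub>G\<^esub> y \<otimes>\<^bsub>G\<^esub> y = x" "x \<otimes>\<^bsub>G\<^esub> y \<otimes>\<^bsub>G\<^esub> inv\<^bsub>G\<^esub> y = x"
proof -
  interpret group G by fact
  show "x \<otimes>\<^bsub>G\<^esub> inv\<^bsub>G\<^esub> y \<otimes>\<^bsub>G\<^esub> y = x" "x \<otimes>\<^bsub>G\<^esub> y \<otimes>\<^bsub>G\<^esub> inv\<^bsub>G\<^esub> y = x"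
    using assms by (simp_all add: m_assoc)
qed

lemma eq_exps:
  fixes N r r' :: nat
  assumes N: "N > 0" and Nz: "of_nat N \<noteq> (0::'k::alg_closed_field)"
    and all: "\<forall>z::'k. z^N = 1 \<longrightarrow> z^r = z^r'" and "r < N" "r' < N"
  shows "r = r'"
proof -
  have gen: "a = b" if ab: "b \<le> a" "a < N" and al: "\<forall>z::'k. z^N = 1 \<longrightarrow> z^a = z^b" for a b
  proof -
    have "\<forall>z::'k. z^N = 1 \<longrightarrow> z^(a-b) = 1"
    proof (intro allI impI)
      fix z :: 'k assume z: "z^N = 1"
      then have "z \<noteq> 0" using N by (auto simp: zero_power)
      moreover have "z^a = z^b * z^(a-b)" using ab by (simp add: power_add[symmetric])
      ultimately show "z^(a-b) = 1" using al z by auto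
    qed
    then have "N dvd a - b" by (rule roots_dvd[OF N Nz])
    moreover have "a - b < N" using ab by simp
    ultimately have "a - b = 0" by (metis dvd_imp_le not_less neq0_conv)
    then show ?thesis using ab by simp
  qed
  show ?thesis
  proof (cases "r' \<le> r")
    case True then show ?thesis using gen assms by blast
  next
    case False then show ?thesis using gen[of r r'] assms by (metis nat_le_linear)
  qed
qed

theorem lemma6p22:
  fixes p :: nat and G :: "('g, 'b) monoid_scheme" and H I :: "'g set" and Fr :: 'g
    and om2 :: "'g \<Rightarrow> 'k::alg_closed_field" and mu :: "'k \<Rightarrow> 'g \<Rightarrow> 'k"
    and r r' :: nat and l l' :: 'k
  assumes "prime p" and "odd p"
    and "CHAR('k) = p" and "\<forall>x::'k. \<exists>n>0. x ^ (p ^ n) = x"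
    and "galois_datum p G H I Fr om2 mu"
    and "r < p\<^sup>2 - 1" and "r' < p\<^sup>2 - 1" and "l \<noteq> 0" and "l' \<noteq> 0"
  shows "L_equivalent G H (psi p G H Fr om2 mu r l) (psi p G H Fr om2 mu r' l') \<longleftrightarrow>
         ((r' = r \<and> l' = l) \<or>
          ([int r' = - (int p * int r)] (mod int (p\<^sup>2 - 1)) \<and> l' = inverse l))"
proof -
  define N where "N = p\<^sup>2 - 1"
  note gd = assms(5)[unfolded galois_datum_def]
  have grp: "group G"
    using gd by (elim conjE) assumption
  have sH: "subgroup H G"
    using gd by (elim conjE) assumption
  have IH: "I \<subseteq> H"
    using gd by (elim conjE) assumption
  have Fr1: "Fr \<in> carrier G"
    using gd by (elim conjE) assumption
  have Fr2: "Fr \<notin> H"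
    using gd by (elim conjE) assumption
  have coset': "\<forall>x\<in>carrier G. x \<notin> H \<longrightarrow> x \<otimes>\<^bsub>G\<^esub> inv\<^bsub>G\<^esub> Fr \<in> H"
    using gd by (elim conjE) assumption
  have omN': "\<forall>h\<in>H. om2 h ^ (p\<^sup>2 - 1) = 1"
    using gd by (elim conjE) assumption
  have omI: "om2 ` I = {z. z ^ (p\<^sup>2 - 1) = 1}"
    using gd by (elim conjE) assumption
  have omFF: "om2 (Fr \<otimes>\<^bsub>G\<^esub> Fr) = 1"
    using gd by (elim conjE) assumption
  have muall: "\<forall>l. l \<noteq> 0 \<longrightarrow>
        (\<forall>h\<in>H. \<forall>k\<in>H. mu l (h \<otimes>\<^bsub>G\<^esub> k) = mu l h * mu l k) \<and>
        (\<forall>i\<in>I. mu l i = 1) \<and>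
        mu l (Fr \<otimes>\<^bsub>G\<^esub> Fr) = l \<and>
        (\<forall>h\<in>H. mu l (Fr \<otimes>\<^bsub>G\<^esub> h \<otimes>\<^bsub>G\<^esub> inv\<^bsub>G\<^esub> Fr) = mu l h)"
    using gd by (elim conjE) assumption
  have Fr: "Fr \<in> carrier G" "Fr \<notin> H" using Fr1 Fr2 by auto
  have coset: "\<And>x. x \<in> carrier G \<Longrightarrow> x \<notin> H \<Longrightarrow> x \<otimes>\<^bsub>G\<^esub> inv\<^bsub>G\<^esub> Fr \<in> H" using coset' by blast
  have omN: "\<And>h. h \<in> H \<Longrightarrow> om2 h ^ (p\<^sup>2 - 1) = 1" using omN' by blast
  have muI: "\<And>l i. l \<noteq> 0 \<Longrightarrow> i \<in> I \<Longrightarrow> mu l i = 1" using muall by blast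
  have muFF: "\<And>l. l \<noteq> 0 \<Longrightarrow> mu l (Fr \<otimes>\<^bsub>G\<^esub> Fr) = l" using muall by blast
  have HG: "H \<subseteq> carrier G" using sH by (rule subgroup.subset)
  have p2: "p \<ge> 2" using assms(1) prime_ge_2_nat by blast
  have p4: "4 \<le> p\<^sup>2"
  proof -
    have "(2::nat)^2 \<le> p^2" by (rule power_mono) (use p2 in auto)
    then show ?thesis by simp
  qed
  have N0: "N > 0" unfolding N_def using p4 by simp
  have NZ: "of_nat N \<noteq> (0::'k)"
  proof
    assume "of_nat N = (0::'k)"
    then have "p dvd N" using assms(3) by (simp add: of_nat_eq_0_iff_char_dvd)
    moreover have "p dvd p\<^sup>2" by simp
    ultimately have "p dvd p\<^sup>2 - N" by (rule dvd_diff_nat[rotated])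
    moreover have "p\<^sup>2 - N = 1" unfolding N_def using p4 by simp
    ultimately show False using p2 by simp
  qed
  have FF: "Fr \<otimes>\<^bsub>G\<^esub> Fr \<in> H"
  proof (rule ccontr)
    assume a: "Fr \<otimes>\<^bsub>G\<^esub> Fr \<notin> H"
    have c: "Fr \<otimes>\<^bsub>G\<^esub> Fr \<in> carrier G" using Fr grp by (simp add: group.is_monoid monoid.m_closed)
    have "Fr \<otimes>\<^bsub>G\<^esub> Fr \<otimes>\<^bsub>G\<^esub> inv\<^bsub>G\<^esub> Fr \<in> H" using coset[OF c a] .
    moreover have "Fr \<otimes>\<^bsub>G\<^esub> Fr \<otimes>\<^bsub>G\<^esub> inv\<^bsub>G\<^esub> Fr = Fr" using Fr grp
      by (simp add: grp_cancel)
    ultimately show False using Fr by simp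
  qed
  define A where "A = (\<lambda>r l h. mu (inverse l) h * om2 h ^ r)"
  define B where "B = (\<lambda>r l h. mu l h * inverse (om2 h) ^ (p * r))"
  have psiH: "\<And>r l h. h \<in> H \<Longrightarrow> psi p G H Fr om2 mu r l h = (diag2 (A r l h) (B r l h), h)"
    by (simp add: psi_def A_def B_def)
  have psiN: "\<And>r l \<sigma>. \<sigma> \<in> carrier G \<Longrightarrow> \<sigma> \<notin> H \<Longrightarrow>
     psi p G H Fr om2 mu r l \<sigma> = (diag2 (A r l (\<sigma> \<otimes>\<^bsub>G\<^esub> inv\<^bsub>G\<^esub> Fr)) (B r l (\<sigma> \<otimes>\<^bsub>G\<^esub> inv\<^bsub>G\<^esub> Fr)) ** diag2 1 l, \<sigma>)"
  proof -
    fix r l \<sigma> assume s: "\<sigma> \<in> carrier G" "\<sigma> \<notin> H"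
    have h: "\<sigma> \<otimes>\<^bsub>G\<^esub> inv\<^bsub>G\<^esub> Fr \<in> H" using coset s by blast
    have e: "\<sigma> \<otimes>\<^bsub>G\<^esub> inv\<^bsub>G\<^esub> Fr \<otimes>\<^bsub>G\<^esub> Fr = \<sigma>" using s Fr grp
      by (simp add: grp_cancel)
    show "psi p G H Fr om2 mu r l \<sigma> = (diag2 (A r l (\<sigma> \<otimes>\<^bsub>G\<^esub> inv\<^bsub>G\<^esub> Fr)) (B r l (\<sigma> \<otimes>\<^bsub>G\<^esub> inv\<^bsub>G\<^esub> Fr)) ** diag2 1 l, \<sigma>)"
      using s h by (simp add: psi_def A_def B_def Lmult_def Lact_def e)
  qed
  have roots: "\<And>z. z^N = 1 \<Longrightarrow> \<exists>i\<in>I. z = om2 i"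
  proof -
    fix z :: 'k assume "z^N = 1"
    then have "z \<in> om2 ` I" using omI by (simp add: N_def)
    then show "\<exists>i\<in>I. z = om2 i" by blast
  qed
  have il: "inverse l \<noteq> 0" "inverse l' \<noteq> 0" using assms(8,9) by simp_all
  have onlyif: "((r' = r \<and> l' = l) \<or>
          ([int r' = - (int p * int r)] (mod int (p\<^sup>2 - 1)) \<and> l' = inverse l))"
    if LE: "L_equivalent G H (psi p G H Fr om2 mu r l) (psi p G H Fr om2 mu r' l')"
  proof -
    obtain g :: "'k^2^2" where ginv: "invertible g" and
      geq: "\<forall>\<sigma>\<in>carrier G. Lmult G H (Lmult G H (g, \<one>\<^bsub>G\<^esub>) (psi p G H Fr om2 mu r l \<sigma>)) (matrix_inv g, \<one>\<^bsub>G\<^esub>) = psi p G H Fr om2 mu r' l' \<sigma>"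
      using LE unfolding L_equivalent_def by blast
    note gi = inv_props[OF ginv]
    obtain x y u v where gx: "g = mk2 x y u v" using mk2_eta by blast
    have comm: "mk2 (x * A r l h) (y * B r l h) (u * A r l h) (v * B r l h)
       = mk2 (A r' l' h * x) (A r' l' h * y) (B r' l' h * u) (B r' l' h * v)" if h: "h \<in> H" for h
    proof -
      have hc: "h \<in> carrier G" using h HG by blast
      have "(g ** diag2 (A r l h) (B r l h) ** matrix_inv g, h) = (diag2 (A r' l' h) (B r' l' h), h)"
        using geq[rule_format, OF hc] h by (simp add: psiH[OF h] conj_eq[OF grp sH hc] Lact_def)
      then have "g ** diag2 (A r l h) (B r l h) ** matrix_inv g ** g = diag2 (A r' l' h) (B r' l' h) ** g"
        by simp
      then have "g ** diag2 (A r l h) (B r l h) = diag2 (A r' l' h) (B r' l' h) ** g"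
        by (metis matrix_mul_assoc gi(2) matrix_mul_rid)
      then show ?thesis by (simp add: gx diag2_mk2 mk2_mult)
    qed
    have nd: "(x \<noteq> 0 \<and> v \<noteq> 0) \<or> (y \<noteq> 0 \<and> u \<noteq> 0)"
      using nondeg gi unfolding gx by blast
    have AFF: "\<And>r l. l \<noteq> 0 \<Longrightarrow> A r l (Fr \<otimes>\<^bsub>G\<^esub> Fr) = inverse l"
      by (simp add: A_def muFF omFF)
    have BFF: "\<And>r l. l \<noteq> 0 \<Longrightarrow> B r l (Fr \<otimes>\<^bsub>G\<^esub> Fr) = l"
      by (simp add: B_def muFF omFF)
    show ?thesis
    proof (cases "x \<noteq> 0")
      case True
      have AA: "A r l h = A r' l' h" if "h \<in> H" for h
        using comm[OF that] True by (simp add: mk2_eq)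
      have "\<forall>z::'k. z^N = 1 \<longrightarrow> z^r = z^r'"
      proof (intro allI impI)
        fix z :: 'k assume "z^N = 1"
        then obtain i where i: "i \<in> I" "z = om2 i" using roots by blast
        then have "A r l i = A r' l' i" using AA IH by blast
        then show "z^r = z^r'" using i il by (simp add: A_def muI)
      qed
      then have "r = r'" using eq_exps[OF N0 NZ] assms(6,7) unfolding N_def by blast
      moreover have "l = l'" using AA[OF FF] AFF assms(8,9) by simp
      ultimately show ?thesis by simp
    next
      case False
      then have y0: "y \<noteq> 0" using nd by blast
      have BA: "B r l h = A r' l' h" if "h \<in> H" for h
        using comm[OF that] y0 by (simp add: mk2_eq)
      have "\<forall>z::'k. z^N = 1 \<longrightarrow> z^(r' + p*r) = 1"
      proof (intro allI impI)
        fix z :: 'k assume zN: "z^N = 1"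
        then have z0: "z \<noteq> 0" using N0 by (auto simp: zero_power)
        obtain i where i: "i \<in> I" "z = om2 i" using roots zN by blast
        then have "B r l i = A r' l' i" using BA IH by blast
        then have "inverse z ^ (p*r) = z ^ r'" using i il assms(8) by (simp add: A_def B_def muI)
        then have "z^r' * z^(p*r) = 1" using z0 by (simp add: power_inverse field_simps)
        then show "z^(r' + p*r) = 1" by (simp add: power_add)
      qed
      then have "N dvd r' + p*r" by (rule roots_dvd[OF N0 NZ])
      then have "int N dvd int r' - (- (int p * int r))" by (metis of_nat_dvd_iff of_nat_add of_nat_mult diff_minus_eq_add)
      then have c: "[int r' = - (int p * int r)] (mod int (p\<^sup>2 - 1))"
        by (simp add: cong_iff_dvd_diff N_def)
      have "l = inverse l'" using BA[OF FF] AFF BFF assms(8,9) by simp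
      then have "l' = inverse l" by simp
      with c show ?thesis by simp
    qed
  qed
  have psiform: "\<And>r l \<sigma>. \<sigma> \<in> carrier G \<Longrightarrow> snd (psi p G H Fr om2 mu r l \<sigma>) = \<sigma>"
    using psiH psiN by (metis snd_conv)
  have ifdir: "L_equivalent G H (psi p G H Fr om2 mu r l) (psi p G H Fr om2 mu r' l')"
    if R: "((r' = r \<and> l' = l) \<or>
          ([int r' = - (int p * int r)] (mod int (p\<^sup>2 - 1)) \<and> l' = inverse l))"
  proof (cases "r' = r \<and> l' = l")
    case True
    have inv1: "invertible (mat 1 :: 'k^2^2)" unfolding invertible_def
      by (rule exI[of _ "mat 1"]) (simp add: matrix_mul_lid)
    have L1: "Lact H \<sigma> (matrix_inv (mat 1)) = (mat 1 :: 'k^2^2)" for \<sigma>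
      unfolding Lact_def matrix_inv_mat1 transpose_mat matrix_inv_mat1 matrix_inv_Phi2 by (simp add: Phi2_mk2 mat1_mk2 transpose_mk2 mk2_mult)
    show ?thesis unfolding L_equivalent_def
    proof (intro exI[of _ "mat 1"] conjI ballI inv1)
      fix \<sigma> assume s: "\<sigma> \<in> carrier G"
      obtain X where X: "psi p G H Fr om2 mu r l \<sigma> = (X, \<sigma>)" using psiform[OF s]
        by (metis prod.collapse)
      show "Lmult G H (Lmult G H (mat 1, \<one>\<^bsub>G\<^esub>) (psi p G H Fr om2 mu r l \<sigma>)) (matrix_inv (mat 1), \<one>\<^bsub>G\<^esub>) =
         psi p G H Fr om2 mu r' l' \<sigma>"
        using True X by (simp add: conj_eq[OF grp sH s] L1 matrix_mul_lid matrix_mul_rid)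
    qed
  next
    case False
    then have c: "[int r' = - (int p * int r)] (mod int (p\<^sup>2 - 1))" and ll: "l' = inverse l" using R by auto
    have "int N dvd int r' - (- (int p * int r))" using c by (simp add: cong_iff_dvd_diff N_def)
    then have "int N dvd int (r' + p * r)" by simp
    then have d1: "N dvd r' + p * r" by (simp only: of_nat_dvd_iff)
    have pN: "p\<^sup>2 = N + 1" unfolding N_def using p4 by simp
    have pp: "p * p = N + 1" using pN by (simp add: power2_eq_square)
    have "p * (r' + p * r) = (r + p * r') + r * N"
    proof -
      have "p * (r' + p * r) = p * r' + (p * p) * r" by (simp add: algebra_simps)
      also have "\<dots> = (r + p * r') + r * N" by (simp add: pp algebra_simps)
      finally show ?thesis .
    qed
    then have "N dvd (r + p * r') + r * N" using d1 by (metis dvd_mult2 mult.commute)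
    then have d2: "N dvd r + p * r'" by simp
    have AB: "A r' l' h = B r l h" "B r' l' h = A r l h" if h: "h \<in> H" for h
    proof -
      have wN: "om2 h ^ N = 1" using omN[OF h] by (simp add: N_def)
      then have w0: "om2 h \<noteq> 0" using N0 by (auto simp: zero_power)
      have "om2 h ^ r' * om2 h ^ (p*r) = 1" using pow_dvd_one[OF wN d1] by (simp add: power_add)
      then have e1: "om2 h ^ r' = inverse (om2 h) ^ (p*r)" by (rule pow_inv_eq[OF w0])
      have "om2 h ^ r * om2 h ^ (p*r') = 1" using pow_dvd_one[OF wN d2] by (simp add: power_add)
      then have e2: "om2 h ^ r = inverse (om2 h) ^ (p*r')" by (rule pow_inv_eq[OF w0])
      show "A r' l' h = B r l h" "B r' l' h = A r l h" using e1 e2 ll assms(8)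
        by (simp_all add: A_def B_def)
    qed
    obtain c where c2: "c ^ 2 = - inverse l" using nth_root_exists[of 2] by auto
    have c0: "c \<noteq> 0" using c2 assms(8) by auto
    have cc: "c * c = - inverse l" using c2 by (simp add: power2_eq_square)
    have ccl0: "c * (c * l) = - 1" using cc assms(8) by (simp add: mult.assoc[symmetric])
    have ccl: "\<And>X. c * (c * (l * X)) = - X"
    proof -
      fix X have "c * (c * (l * X)) = (c * (c * l)) * X" by (simp add: mult.assoc)
      then show "c * (c * (l * X)) = - X" using ccl0 by simp
    qed
    define g where "g = mk2 0 c c 0"
    have ginv: "invertible g" unfolding invertible_def g_def
      by (rule exI[of _ "mk2 0 (inverse c) (inverse c) 0"]) (use c0 in \<open>simp add: mk2_mult mat1_mk2\<close>)
    have gi: "matrix_inv g = mk2 0 (inverse c) (inverse c) 0" unfolding g_def by (rule matrix_inv_anti[OF c0])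
    have gTi: "matrix_inv (transpose (matrix_inv g)) = g"
      unfolding gi transpose_mk2 using matrix_inv_anti[of "inverse c"] c0 by (simp add: g_def)
    show ?thesis unfolding L_equivalent_def
    proof (intro exI[of _ g] conjI ballI ginv)
      fix \<sigma> assume s: "\<sigma> \<in> carrier G"
      show "Lmult G H (Lmult G H (g, \<one>\<^bsub>G\<^esub>) (psi p G H Fr om2 mu r l \<sigma>)) (matrix_inv g, \<one>\<^bsub>G\<^esub>) =
         psi p G H Fr om2 mu r' l' \<sigma>"
      proof (cases "\<sigma> \<in> H")
        case True
        show ?thesis using True c0
          by (simp add: psiH conj_eq[OF grp sH s] Lact_def AB gi) (simp add: g_def diag2_mk2 mk2_mult mk2_eq field_simps)
      next
        case False
        have h: "\<sigma> \<otimes>\<^bsub>G\<^esub> inv\<^bsub>G\<^esub> Fr \<in> H" using coset s False by blast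
        show ?thesis using False c0 assms(8) cc
          by (simp add: psiN[OF s False] conj_eq[OF grp sH s] Lact_def AB[OF h] gTi matrix_inv_Phi2)
            (simp add: g_def diag2_mk2 mk2_mult Phi2_mk2 mk2_eq ll field_simps ccl)
      qed
    qed
  qed
  show ?thesis using onlyif ifdir by blast
qed
end
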